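(* If $\mathcal{F}$ is a uniformly Lipschitz collection of maps between metric spaces (i.e. $\sup_{F\in\mathcal{F}}\mathrm{Lip}(F)<\infty$), then $\lim_n a_n(\mathcal{F})$ exists and equals $\inf_n a_n(\mathcal{F})$.
   Context: Convention $\frac00=0$. $\mathrm{Lip}(g)=\sup_{x,y}d_V(g(x),g(y))/d_U(x,y)$. $2^n=\{\pm1\}^n$ carries the normalized Hamming metric $\partial(\varepsilon,\delta)=\frac1n|\{i:\varepsilon(i)\ne\delta(i)\}|$ and the uniform probability measure (expectation $\mathbb{E}$). $a_n(\mathcal{F})$ is the infimum of those $a>0$ such that for every $F:X\to Y$ in $\mathcal{F}$ and every $f:2^n\to X$, $\mathbb{E}\,d_Y(F\circ f(\varepsilon),F\circ f(-\varepsilon))\le a\,\mathrm{Lip}(f:2^n\to X)$. *)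

theory Defs
  imports "HOL-Analysis.Analysis"
begin

text \<open>The discrete cube 2^n = {+-1}^n, encoded as boolean lists of length n
  (True = +1, False = -1).\<close>
definition cube :: "nat \<Rightarrow> bool list set" where
  "cube n = {xs. length xs = n}"

text \<open>Normalized Hamming metric (with 0/0 = 0, automatic in Isabelle).\<close>
definition ham :: "nat \<Rightarrow> bool list \<Rightarrow> bool list \<Rightarrow> real" where
  "ham n e d = real (card {i. i < n \<and> e ! i \<noteq> d ! i}) / real n"

definition negc :: "bool list \<Rightarrow> bool list" where
  "negc e = map Not e"

definition cexp :: "nat \<Rightarrow> (bool list \<Rightarrow> real) \<Rightarrow> real" where
  "cexp n h = (\<Sum>e\<in>cube n. h e) / 2 ^ n"

text \<open>Lipschitz constant of g : (U,dU) -> (V,dV), as an extended real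
  (sup over pairs, with 0/0 = 0).\<close>
definition lip :: "'a set \<Rightarrow> ('a \<Rightarrow> 'a \<Rightarrow> real) \<Rightarrow> ('b \<Rightarrow> 'b \<Rightarrow> real) \<Rightarrow> ('a \<Rightarrow> 'b) \<Rightarrow> ereal" where
  "lip U dU dV g = Sup (insert 0 ((\<lambda>(x,y). ereal (dV (g x) (g y) / dU x y)) ` (U \<times> U)))"

definition an :: "nat \<Rightarrow> ('a metric \<times> 'b metric \<times> ('a \<Rightarrow> 'b)) set \<Rightarrow> real" where
  "an n FF = Inf {a. a > 0 \<and>
     (\<forall>(X, Y, F) \<in> FF. \<forall>f. f ` cube n \<subseteq> mspace X \<longrightarrow>
        ereal (cexp n (\<lambda>e. mdist Y (F (f e)) (F (f (negc e)))))
          \<le> ereal a * lip (cube n) (ham n) (mdist X) f)}"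

end

theory Submission
  imports Defs
begin

lemma cube_finite: "finite (cube n)"
  and cube_card: "card (cube n) = 2 ^ n"
proof -
  have e: "cube n = {xs. set xs \<subseteq> (UNIV::bool set) \<and> length xs = n}"
    by (auto simp: cube_def)
  show "finite (cube n)" unfolding e by (rule finite_lists_length_eq) simp
  show "card (cube n) = 2 ^ n" unfolding e by (subst card_lists_length_eq) auto
qed

lemma lip_le_iff:
  "lip U dU dV g \<le> ereal r \<longleftrightarrow> (0 \<le> r \<and> (\<forall>x\<in>U. \<forall>y\<in>U. dV (g x) (g y) / dU x y \<le> r))"
  unfolding lip_def by (auto simp: Sup_le_iff)

lemma lip_ge: "x \<in> U \<Longrightarrow> y \<in> U \<Longrightarrow> ereal (dV (g x) (g y) / dU x y) \<le> lip U dU dV g"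
  unfolding lip_def by (rule Sup_upper) auto

lemma lip_nonneg: "0 \<le> lip U dU dV g"
  unfolding lip_def by (rule Sup_upper) auto

definition lipr where "lipr U dU dV g = real_of_ereal (lip U dU dV g)"

lemma lip_fin:
  assumes "finite U"
  shows "lip U dU dV g = ereal (lipr U dU dV g)"
proof -
  define M where "M = Max (insert 0 ((\<lambda>(x,y). dV (g x) (g y) / dU x y) ` (U \<times> U)))"
  have "lip U dU dV g \<le> ereal M"
    unfolding lip_le_iff M_def using assms by (auto intro!: Max_ge)
  moreover have "0 \<le> lip U dU dV g" by (rule lip_nonneg)
  ultimately show ?thesis unfolding lipr_def
    by (cases "lip U dU dV g") auto
qed

lemma lipr_nonneg: "finite U \<Longrightarrow> 0 \<le> lipr U dU dV g"
  using lip_fin[of U dU dV g] lip_nonneg[of U dU dV g] by (simp add: zero_ereal_def)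

lemma lipr_ge: "finite U \<Longrightarrow> x \<in> U \<Longrightarrow> y \<in> U \<Longrightarrow> dV (g x) (g y) / dU x y \<le> lipr U dU dV g"
  using lip_fin lip_ge by (metis ereal_less_eq(3))

lemma lipr_le: "finite U \<Longrightarrow> 0 \<le> r \<Longrightarrow> (\<And>x y. x\<in>U \<Longrightarrow> y\<in>U \<Longrightarrow> dV (g x) (g y) / dU x y \<le> r)
   \<Longrightarrow> lipr U dU dV g \<le> r"
  using lip_fin lip_le_iff by (metis ereal_less_eq(3))


definition gm :: "nat \<Rightarrow> nat \<Rightarrow> bool list \<Rightarrow> bool list \<Rightarrow> bool list" where
  "gm N n x d = map (\<lambda>i. (x!i) = (d!(i mod n))) [0..<N]"

lemma gm_cube: "gm N n x d \<in> cube N"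
  by (simp add: gm_def cube_def)

lemma gm_nth: "i < N \<Longrightarrow> gm N n x d ! i = ((x!i) = (d!(i mod n)))"
  by (simp add: gm_def)

lemma gm_negc: "0 < n \<Longrightarrow> d \<in> cube n \<Longrightarrow> negc (gm N n x d) = gm N n x (negc d)"
  by (auto simp: gm_def negc_def cube_def)

lemma gm_invol: "x \<in> cube N \<Longrightarrow> gm N n (gm N n x d) d = x"
  by (auto simp: gm_def cube_def intro!: nth_equalityI)

lemma gm_bij: "bij_betw (\<lambda>x. gm N n x d) (cube N) (cube N)"
  by (rule bij_betwI[where g="\<lambda>x. gm N n x d"]) (auto simp: gm_cube gm_invol)

lemma ham_nonneg: "0 \<le> ham n e d"
  by (simp add: ham_def)

lemma ham_zero: "e \<in> cube n \<Longrightarrow> d \<in> cube n \<Longrightarrow> ham n e d = 0 \<Longrightarrow> e = d"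
proof -
  assume a: "e \<in> cube n" "d \<in> cube n" "ham n e d = 0"
  show "e = d"
  proof (cases "n = 0")
    case True with a show ?thesis by (simp add: cube_def)
  next
    case False
    have fin: "finite {i. i < n \<and> e ! i \<noteq> d ! i}" by simp
    from a False have "card {i. i < n \<and> e ! i \<noteq> d ! i} = 0" by (simp add: ham_def)
    with fin have "{i. i < n \<and> e ! i \<noteq> d ! i} = {}" by simp
    with a show ?thesis by (auto simp: cube_def intro!: nth_equalityI)
  qed
qed

lemma ham_negc: "0 < n \<Longrightarrow> e \<in> cube n \<Longrightarrow> ham n e (negc e) = 1"
proof -
  assume a: "0 < n" "e \<in> cube n"
  then have "{i. i < n \<and> e ! i \<noteq> negc e ! i} = {..<n}" by (auto simp: negc_def cube_def)
  with a show ?thesis by (simp add: ham_def)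
qed

lemma ham_gm:
  assumes "0 < n" "0 < N"
  shows "ham N (gm N n x d) (gm N n x d') \<le> (real (N div n + 1) * n / N) * ham n d d'"
proof -
  define D where "D = {j. j < n \<and> d ! j \<noteq> d' ! j}"
  have e: "{i. i < N \<and> gm N n x d ! i \<noteq> gm N n x d' ! i} = {i. i < N \<and> d!(i mod n) \<noteq> d'!(i mod n)}"
    by (auto simp: gm_nth)
  have "card {i. i < N \<and> d!(i mod n) \<noteq> d'!(i mod n)} \<le> card (D \<times> {..N div n})"
  proof (rule card_inj_on_le[where f="\<lambda>i. (i mod n, i div n)"])
    show "inj_on (\<lambda>i. (i mod n, i div n)) {i. i < N \<and> d ! (i mod n) \<noteq> d' ! (i mod n)}"
    proof (rule inj_onI)
      fix i j assume "(i mod n, i div n) = (j mod n, j div n)"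
      then have "i mod n = j mod n" "i div n = j div n" by simp_all
      moreover have "i = i div n * n + i mod n" "j = j div n * n + j mod n" by simp_all
      ultimately show "i = j" by simp
    qed
    show "(\<lambda>i. (i mod n, i div n)) ` {i. i < N \<and> d ! (i mod n) \<noteq> d' ! (i mod n)} \<subseteq> D \<times> {..N div n}"
    proof (rule image_subsetI)
      fix i assume i: "i \<in> {i. i < N \<and> d ! (i mod n) \<noteq> d' ! (i mod n)}"
      then have "i mod n < n" using assms by simp
      moreover have "i div n \<le> N div n" using i by (simp add: div_le_mono)
      ultimately show "(i mod n, i div n) \<in> D \<times> {..N div n}" using i by (simp add: D_def)
    qed
    show "finite (D \<times> {..N div n})" by (simp add: D_def)
  qed
  then have c: "real (card {i. i < N \<and> gm N n x d ! i \<noteq> gm N n x d' ! i}) \<le> real (card D) * real (N div n + 1)"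
  proof -
    have "card {i. i < N \<and> d!(i mod n) \<noteq> d'!(i mod n)} \<le> card D * (N div n + 1)"
      using \<open>card _ \<le> card (D \<times> _)\<close> by (simp add: card_cartesian_product)
    then have "real (card {i. i < N \<and> d!(i mod n) \<noteq> d'!(i mod n)}) \<le> real (card D * (N div n + 1))"
      by (simp only: of_nat_le_iff)
    then show ?thesis unfolding e by (simp add: algebra_simps)
  qed
  have "ham N (gm N n x d) (gm N n x d') \<le> real (card D) * real (N div n + 1) / N"
    unfolding ham_def using c assms by (simp add: divide_right_mono)
  also have "\<dots> = (real (N div n + 1) * n / N) * ham n d d'"
    using assms by (simp add: ham_def D_def field_simps)
  finally show ?thesis .
qed


lemma lip_gm:
  assumes n: "0 < n" "0 < N" and f: "f ` cube N \<subseteq> mspace X" and x: "x \<in> cube N"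
  shows "lipr (cube n) (ham n) (mdist X) (\<lambda>d. f (gm N n x d))
     \<le> (real (N div n + 1) * n / N) * lipr (cube N) (ham N) (mdist X) f"
proof -
  define c where "c = real (N div n + 1) * n / N"
  have c0: "0 < c" using n by (simp add: c_def)
  define K where "K = lipr (cube N) (ham N) (mdist X) f"
  have K0: "0 \<le> K" unfolding K_def by (rule lipr_nonneg[OF cube_finite])
  have "lipr (cube n) (ham n) (mdist X) (\<lambda>d. f (gm N n x d)) \<le> c * K"
  proof (rule lipr_le[OF cube_finite])
  show "0 \<le> c * K" using c0 K0 by simp
  fix d d' assume d: "d \<in> cube n" "d' \<in> cube n"
  let ?u = "gm N n x d" and ?v = "gm N n x d'"
  have hle: "ham N ?u ?v \<le> c * ham n d d'" unfolding c_def by (rule ham_gm[OF n])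
  have uv: "?u \<in> cube N" "?v \<in> cube N" by (rule gm_cube)+
  show "mdist X (f ?u) (f ?v) / ham n d d' \<le> c * K"
  proof (cases "ham n d d' = 0")
    case True then show ?thesis using c0 K0 by simp
  next
    case False
    then have hp: "0 < ham n d d'" using ham_nonneg[of n d d'] by linarith
    show ?thesis
    proof (cases "ham N ?u ?v = 0")
      case True
      then have "?u = ?v" using ham_zero uv by blast
      moreover have "f ?v \<in> mspace X" using f uv by blast
      then have "mdist X (f ?v) (f ?v) = 0" by simp
      ultimately show ?thesis using c0 K0 by simp
    next
      case False
      then have hq: "0 < ham N ?u ?v" using ham_nonneg[of N ?u ?v] by linarith
      have r: "mdist X (f ?u) (f ?v) / ham N ?u ?v \<le> K"
        unfolding K_def by (rule lipr_ge[OF cube_finite uv])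
      have dd: "0 \<le> mdist X (f ?u) (f ?v)" by simp
      have "mdist X (f ?u) (f ?v) / ham n d d' \<le> mdist X (f ?u) (f ?v) / (ham N ?u ?v / c)"
      proof (rule divide_left_mono[OF _ dd])
        show "ham N ?u ?v / c \<le> ham n d d'" using hle c0 by (simp add: pos_divide_le_eq mult.commute)
        show "0 < ham n d d' * (ham N ?u ?v / c)" using hp hq c0 by simp
      qed
      also have "\<dots> = c * (mdist X (f ?u) (f ?v) / ham N ?u ?v)" using c0 by simp
      also have "\<dots> \<le> c * K" by (rule mult_left_mono[OF r]) (use c0 in simp)
      finally show ?thesis .
    qed
  qed
  qed
  then show ?thesis unfolding c_def K_def .
qed

definition SS :: "nat \<Rightarrow> ('a metric \<times> 'b metric \<times> ('a \<Rightarrow> 'b)) set \<Rightarrow> real set" where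
  "SS n FF = {a. 0 < a \<and> (\<forall>(X, Y, F) \<in> FF. \<forall>f. f ` cube n \<subseteq> mspace X \<longrightarrow>
        cexp n (\<lambda>e. mdist Y (F (f e)) (F (f (negc e)))) \<le> a * lipr (cube n) (ham n) (mdist X) f)}"

lemma an_eq: "an n FF = Inf (SS n FF)"
  unfolding an_def SS_def lip_fin[OF cube_finite] by simp

lemma SS_step:
  assumes n: "0 < n" "0 < N" and a: "a \<in> SS n FF"
  shows "(real (N div n + 1) * n / N) * a \<in> SS N FF"
proof -
  define c where "c = real (N div n + 1) * n / N"
  have c0: "0 < c" using n by (simp add: c_def)
  have a0: "0 < a" using a by (simp add: SS_def)
  have "cexp N (\<lambda>e. mdist Y (F (f e)) (F (f (negc e)))) \<le> c * a * lipr (cube N) (ham N) (mdist X) f"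
    if FF: "(X, Y, F) \<in> FF" and f: "f ` cube N \<subseteq> mspace X" for X Y F f
  proof -
    define H where "H e = mdist Y (F (f e)) (F (f (negc e)))" for e
    define K where "K = lipr (cube N) (ham N) (mdist X) f"
    have inner: "(\<Sum>d\<in>cube n. H (gm N n x d)) \<le> 2^n * (a * (c * K))" if x: "x \<in> cube N" for x
    proof -
      have fx: "(\<lambda>d. f (gm N n x d)) ` cube n \<subseteq> mspace X" using f gm_cube by blast
      have "cexp n (\<lambda>e. mdist Y (F (f (gm N n x e))) (F (f (gm N n x (negc e)))))
            \<le> a * lipr (cube n) (ham n) (mdist X) (\<lambda>d. f (gm N n x d))"
        using a FF fx unfolding SS_def by fastforce
      also have "\<dots> \<le> a * (c * K)"
        by (rule mult_left_mono[OF lip_gm[OF n f x, folded c_def K_def]]) (use a0 in simp)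
      finally have le: "cexp n (\<lambda>e. mdist Y (F (f (gm N n x e))) (F (f (gm N n x (negc e))))) \<le> a * (c * K)" .
      have "cexp n (\<lambda>e. mdist Y (F (f (gm N n x e))) (F (f (gm N n x (negc e)))))
           = (\<Sum>d\<in>cube n. H (gm N n x d)) / 2^n"
        unfolding cexp_def H_def by (intro arg_cong2[where f="(/)"] sum.cong refl) (simp add: gm_negc[OF n(1)])
      with le show ?thesis by (simp add: field_simps)
    qed
    have reind: "(\<Sum>x\<in>cube N. H (gm N n x d)) = (\<Sum>e\<in>cube N. H e)" for d
      by (rule sum.reindex_bij_betw[OF gm_bij])
    have "2^n * (\<Sum>e\<in>cube N. H e) = (\<Sum>d\<in>cube n. \<Sum>x\<in>cube N. H (gm N n x d))"
      by (simp add: reind cube_card)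
    also have "\<dots> = (\<Sum>x\<in>cube N. \<Sum>d\<in>cube n. H (gm N n x d))" by (rule sum.swap)
    also have "\<dots> \<le> (\<Sum>x\<in>cube N. 2^n * (a * (c * K)))" by (rule sum_mono) (rule inner)
    also have "\<dots> = 2^N * 2^n * (a * (c * K))" by (simp add: cube_card)
    finally have "(\<Sum>e\<in>cube N. H e) \<le> 2^N * (a * (c * K))" by simp
    then show ?thesis unfolding cexp_def H_def[symmetric] K_def[symmetric]
      by (simp add: field_simps)
  qed
  then show ?thesis using c0 a0 unfolding SS_def c_def[symmetric] by auto
qed


lemma SS_bound:
  assumes maps: "\<forall>(X, Y, F) \<in> FF. F ` mspace X \<subseteq> mspace Y"
    and L: "\<forall>(X, Y, F) \<in> FF. lip (mspace X) (mdist X) (mdist Y) F \<le> ereal L"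
    and n: "0 < n"
  shows "max L 0 + 1 \<in> SS n FF"
proof -
  define L' where "L' = max L 0"
  have L'0: "0 \<le> L'" by (simp add: L'_def)
  have "cexp n (\<lambda>e. mdist Y (F (f e)) (F (f (negc e)))) \<le> (L' + 1) * lipr (cube n) (ham n) (mdist X) f"
    if FF: "(X, Y, F) \<in> FF" and f: "f ` cube n \<subseteq> mspace X" for X Y F f
  proof -
    define K where "K = lipr (cube n) (ham n) (mdist X) f"
    have K0: "0 \<le> K" unfolding K_def by (rule lipr_nonneg[OF cube_finite])
    have FL: "\<forall>u\<in>mspace X. \<forall>v\<in>mspace X. mdist Y (F u) (F v) / mdist X u v \<le> L"
      using L FF lip_le_iff by fastforce
    have FY: "F ` mspace X \<subseteq> mspace Y" using maps FF by fastforce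
    have pt: "mdist Y (F (f e)) (F (f (negc e))) \<le> L' * K" if e: "e \<in> cube n" for e
    proof -
      have ne: "negc e \<in> cube n" using e by (simp add: cube_def negc_def)
      let ?u = "f e" and ?v = "f (negc e)"
      have uv: "?u \<in> mspace X" "?v \<in> mspace X" using f e ne by blast+
      have dK: "mdist X ?u ?v \<le> K"
        using lipr_ge[OF cube_finite e ne, where dU="ham n" and dV="mdist X" and g=f] ham_negc[OF n e] unfolding K_def by simp
      show ?thesis
      proof (cases "?u = ?v")
        case True
        have "F ?v \<in> mspace Y" using FY uv by blast
        then have "mdist Y (F ?u) (F ?v) = 0" using True by simp
        then show ?thesis using L'0 K0 by simp
      next
        case False
        then have "mdist X ?u ?v \<noteq> 0" using uv by simp
        then have dp: "0 < mdist X ?u ?v" using mdist_nonneg[of X ?u ?v] by linarith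
        have "mdist Y (F ?u) (F ?v) / mdist X ?u ?v \<le> L" using FL uv by blast
        then have "mdist Y (F ?u) (F ?v) \<le> L * mdist X ?u ?v" using dp by (simp add: divide_le_eq)
        also have "\<dots> \<le> L' * mdist X ?u ?v" using dp by (simp add: L'_def mult_right_mono)
        also have "\<dots> \<le> L' * K" using dK L'0 by (simp add: mult_left_mono)
        finally show ?thesis .
      qed
    qed
    have "(\<Sum>e\<in>cube n. mdist Y (F (f e)) (F (f (negc e)))) \<le> (\<Sum>e\<in>cube n. L' * K)"
      by (rule sum_mono) (rule pt)
    also have "\<dots> = 2^n * (L' * K)" by (simp add: cube_card)
    finally have "cexp n (\<lambda>e. mdist Y (F (f e)) (F (f (negc e)))) \<le> L' * K"
      unfolding cexp_def by (simp add: field_simps)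
    also have "\<dots> \<le> (L' + 1) * K" using K0 by (simp add: mult_right_mono)
    finally show ?thesis unfolding K_def .
  qed
  then show ?thesis unfolding SS_def L'_def[symmetric] using L'0 by fastforce
qed


lemma SS_pos: "a \<in> SS n FF \<Longrightarrow> 0 < a"
  by (simp add: SS_def)

theorem proposition5p2:
  fixes FF :: "('a metric \<times> 'b metric \<times> ('a \<Rightarrow> 'b)) set"
  assumes maps: "\<forall>(X, Y, F) \<in> FF. F ` mspace X \<subseteq> mspace Y"
    and unif_lip: "\<exists>L::real. \<forall>(X, Y, F) \<in> FF. lip (mspace X) (mdist X) (mdist Y) F \<le> ereal L"
  shows "convergent (\<lambda>n. an n FF) \<and> (\<lambda>n. an n FF) \<longlonglongrightarrow> (INF n\<in>{1..}. an n FF)"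
proof -
  obtain L where L: "\<forall>(X, Y, F) \<in> FF. lip (mspace X) (mdist X) (mdist Y) F \<le> ereal L"
    using unif_lip by blast
  define B where "B = max L 0 + 1"
  have B0: "0 < B" by (simp add: B_def)
  have inS: "B \<in> SS n FF" if "0 < n" for n
    unfolding B_def by (rule SS_bound[OF maps L that])
  have bdd: "bdd_below (SS n FF)" for n
    by (rule bdd_belowI[where m=0]) (auto dest: SS_pos)
  have an0: "0 \<le> an n FF" if "0 < n" for n
    unfolding an_eq using inS[OF that] by (intro cInf_greatest) (auto dest: SS_pos)
  have anB: "an n FF \<le> B" if "0 < n" for n
    unfolding an_eq by (rule cInf_lower[OF inS[OF that] bdd])
  have key: "an N FF \<le> an n FF + n * B / N" if n: "0 < n" "0 < N" for n N
  proof -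
    define c where "c = real (N div n + 1) * n / N"
    have c0: "0 < c" using n by (simp add: c_def)
    have "an N FF / c \<le> a" if a: "a \<in> SS n FF" for a
    proof -
      have "an N FF \<le> c * a" unfolding an_eq c_def
        by (rule cInf_lower[OF SS_step[OF n a] bdd])
      then show ?thesis using c0 by (simp add: divide_le_eq mult.commute)
    qed
    then have "an N FF / c \<le> an n FF" unfolding an_eq[of n]
      using inS[OF n(1)] by (intro cInf_greatest) auto
    then have 1: "an N FF \<le> c * an n FF" using c0 by (simp add: divide_le_eq mult.commute)
    have "N div n * n \<le> N" by simp
    then have "real (N div n) * n \<le> N"
      by (metis of_nat_le_iff of_nat_mult)
    then have "c \<le> 1 + n / N" using n by (simp add: c_def field_simps)
    then have "c * an n FF \<le> (1 + n / N) * an n FF" using an0[OF n(1)] by (rule mult_right_mono)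
    also have "\<dots> = an n FF + n * an n FF / N" by (simp add: field_simps)
    also have "\<dots> \<le> an n FF + n * B / N"
      using anB[OF n(1)] n by (simp add: divide_right_mono mult_left_mono)
    finally show ?thesis using 1 by linarith
  qed
  define m where "m = (INF n\<in>{1..}. an n FF)"
  have bddI: "bdd_below ((\<lambda>n. an n FF) ` {1..})"
    by (rule bdd_belowI2[where m=0]) (simp add: an0)
  have mle: "m \<le> an n FF" if "1 \<le> n" for n
    unfolding m_def using that bddI by (intro cINF_lower) auto
  have lim: "(\<lambda>n. an n FF) \<longlonglongrightarrow> m"
  proof (rule LIMSEQ_I)
    fix r :: real assume r: "0 < r"
    obtain n where n: "1 \<le> n" "an n FF < m + r/2"
    proof (rule ccontr)
      assume "\<not> thesis"
      then have "\<forall>n\<in>{1..}. m + r/2 \<le> an n FF" using that by force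
      then have "m + r/2 \<le> m" unfolding m_def by (intro cINF_greatest) auto
      then show False using r by simp
    qed
    define no where "no = max 1 (nat \<lceil>2 * n * B / r\<rceil> + 1)"
    show "\<exists>no. \<forall>N\<ge>no. norm (an N FF - m) < r"
    proof (intro exI allI impI)
      fix N assume N: "no \<le> N"
      then have N1: "1 \<le> N" by (simp add: no_def)
      have "2 * n * B / r < N" using N unfolding no_def by linarith
      then have "n * B / N < r / 2" using r N1 by (simp add: field_simps)
      moreover have "an N FF \<le> an n FF + n * B / N" using key[of n N] n N1 by simp
      ultimately have "an N FF < m + r" using n(2) by linarith
      moreover have "m \<le> an N FF" using mle N1 by simp
      ultimately show "norm (an N FF - m) < r" by simp
    qed
  qed
  then show ?thesis unfolding m_def by (auto intro: convergentI)
qed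

end
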